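(* Let $A \in \mathbb{R}^{p \times n}$ have all entries nonnegative, let $1 \leq k \leq p$, and let $\widetilde{x} \in \{0,1\}^n$. Then for all $x \in \{0,1\}^n$, $$Q_k(Ax) \geq Q_k(A\widetilde{x})\left(\sum_{i=1}^n \widetilde{x}_i x_i - \sum_{i=1}^n \widetilde{x}_i + 1\right),$$ and this inequality holds with equality for $x = \widetilde{x}$.
   Context: For $y \in \mathbb{R}^p$ and an integer $1 \leq k \leq p$, $Q_k(y)$ denotes the $k$-th largest entry of $y$ (entries counted with multiplicity). *)

theory Defs
  imports "HOL-Analysis.Analysis" "HOL-Library.Multiset"
begin

definition kth_largest :: "nat \<Rightarrow> real ^ 'p \<Rightarrow> real" where
  "kth_largest k y =
     rev (sorted_list_of_multiset (image_mset (\<lambda>i. y $ i) (mset_set (UNIV :: 'p set)))) ! (k - 1)"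

end

theory Submission
  imports Defs
begin

definition LL :: "('p::finite \<Rightarrow> real) \<Rightarrow> real list" where
  "LL f = sorted_list_of_multiset (image_mset f (mset_set (UNIV :: 'p set)))"

lemma LL_len: "length (LL (f :: 'p::finite \<Rightarrow> real)) = CARD('p)"
proof -
  have "length (LL f) = size (mset (LL f))" by simp
  also have "\<dots> = CARD('p)" unfolding LL_def by simp
  finally show ?thesis .
qed

lemma LL_cnt: "length (filter P (LL (f :: 'p::finite \<Rightarrow> real))) = card {i. P (f i)}"
proof -
  have "length (filter P (LL f)) = size (mset (filter P (LL f)))" by (simp only: size_mset)
  also have "\<dots> = size (filter_mset P (mset (LL f)))"
    by (simp only: mset_filter)
  also have "\<dots> = size (filter_mset P (image_mset f (mset_set (UNIV :: 'p set))))"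
    unfolding LL_def by simp
  also have "\<dots> = size (image_mset f (filter_mset (\<lambda>i. P (f i)) (mset_set (UNIV :: 'p set))))"
    by (simp add: filter_mset_image_mset)
  also have "\<dots> = card {i. P (f i)}" by simp
  finally show ?thesis .
qed

lemma LL_sorted: "sorted (LL f)" unfolding LL_def by simp

lemma sorted_ge_cnt:
  fixes ys :: "real list"
  assumes "sorted ys" "j < length ys" "t \<le> ys ! j"
  shows "length ys - j \<le> length (filter (\<lambda>x. t \<le> x) ys)"
proof -
  have "\<forall>x\<in>set (drop j ys). t \<le> x"
  proof
    fix x assume "x \<in> set (drop j ys)"
    then obtain i where "i < length ys - j" "x = ys ! (j + i)"
      by (auto simp: in_set_conv_nth)
    moreover have "ys ! j \<le> ys ! (j+i)" using assms(1) \<open>i < length ys - j\<close>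
      by (simp add: sorted_nth_mono)
    ultimately show "t \<le> x" using assms(3) by simp
  qed
  hence "filter (\<lambda>x. t \<le> x) (drop j ys) = drop j ys" by simp
  hence "length (filter (\<lambda>x. t \<le> x) (drop j ys)) = length ys - j" by simp
  moreover have "length (filter (\<lambda>x. t \<le> x) (drop j ys)) \<le> length (filter (\<lambda>x. t \<le> x) ys)"
    by (metis append_take_drop_id filter_append le_add2 length_append)
  ultimately show ?thesis by simp
qed

lemma cnt_ge_sorted:
  fixes ys :: "real list"
  assumes "sorted ys" "j < length ys" "length ys - j \<le> length (filter (\<lambda>x. t \<le> x) ys)"
  shows "t \<le> ys ! j"
proof (rule ccontr)
  assume "\<not> t \<le> ys ! j"
  have "\<forall>x\<in>set (take (Suc j) ys). \<not> t \<le> x"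
  proof
    fix x assume "x \<in> set (take (Suc j) ys)"
    then obtain i where i1: "i < Suc j" and i2: "x = ys ! i" using assms(2)
      by (auto simp: in_set_conv_nth)
    hence "i \<le> j" "x = ys ! i" by simp_all
    moreover have "ys ! i \<le> ys ! j" using assms(1,2) \<open>i \<le> j\<close>
      by (simp add: sorted_nth_mono)
    ultimately show "\<not> t \<le> x" using \<open>\<not> t \<le> ys ! j\<close> by simp
  qed
  hence "filter (\<lambda>x. t \<le> x) (take (Suc j) ys) = []" by (simp add: filter_empty_conv)
  hence "length (filter (\<lambda>x. t \<le> x) ys) = length (filter (\<lambda>x. t \<le> x) (drop (Suc j) ys))"
    by (metis append_take_drop_id filter_append self_append_conv2)
  also have "\<dots> \<le> length ys - Suc j" by (metis length_drop length_filter_le)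
  finally show False using assms(2,3) by simp
qed

lemma kth_LL:
  assumes "1 \<le> k" "k \<le> CARD('p::finite)"
  shows "kth_largest k (y :: real ^ 'p) = LL (\<lambda>i. y $ i) ! (CARD('p) - k)"
  unfolding kth_largest_def LL_def[symmetric] using assms
  by (simp add: rev_nth LL_len Suc_diff_le)

lemma kth_mono:
  fixes y z :: "real ^ 'p::finite"
  assumes "1 \<le> k" "k \<le> CARD('p)" "\<forall>i. y $ i \<le> z $ i"
  shows "kth_largest k y \<le> kth_largest k z"
proof -
  let ?t = "kth_largest k y"
  have j: "CARD('p) - k < CARD('p)" using assms by simp
  have "length (LL (\<lambda>i. y $ i)) - (CARD('p) - k) \<le> length (filter (\<lambda>x. ?t \<le> x) (LL (\<lambda>i. y $ i)))"
    using sorted_ge_cnt[OF LL_sorted, of "CARD('p) - k" "\<lambda>i. y $ i" ?t] j kth_LL[OF assms(1,2), of y] LL_len[of "\<lambda>i. y $ i"]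
    by simp
  hence "k \<le> card {i. ?t \<le> y $ i}" using assms by (simp add: LL_len LL_cnt)
  also have "\<dots> \<le> card {i. ?t \<le> z $ i}"
    by (rule card_mono) (use assms(3) order_trans in auto)
  finally have "length (LL (\<lambda>i. z $ i)) - (CARD('p) - k) \<le> length (filter (\<lambda>x. ?t \<le> x) (LL (\<lambda>i. z $ i)))"
    using assms by (simp add: LL_len LL_cnt)
  hence "?t \<le> LL (\<lambda>i. z $ i) ! (CARD('p) - k)"
    using cnt_ge_sorted[OF LL_sorted, of "CARD('p) - k" "\<lambda>i. z $ i" ?t] j LL_len[of "\<lambda>i. z $ i"] by simp
  thus ?thesis using kth_LL[OF assms(1,2)] by simp
qed

lemma kth_nonneg:
  fixes y :: "real ^ 'p::finite"
  assumes "1 \<le> k" "k \<le> CARD('p)" "\<forall>i. 0 \<le> y $ i"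
  shows "0 \<le> kth_largest k y"
proof -
  have "kth_largest k (0::real^'p) \<le> kth_largest k y"
    using kth_mono[OF assms(1,2)] assms(3) by simp
  moreover have "kth_largest k (0::real^'p) = 0"
  proof -
    have "set (LL (\<lambda>i. (0::real^'p) $ i)) \<subseteq> {0}"
      unfolding LL_def by auto
    moreover have "CARD('p) - k < length (LL (\<lambda>i. (0::real^'p) $ i))"
      using assms LL_len[of "\<lambda>i. (0::real^'p) $ i"] by simp
    ultimately show ?thesis using kth_LL[OF assms(1,2)]
      by (metis nth_mem singletonD subsetD)
  qed
  ultimately show ?thesis by simp
qed

theorem theorem5:
  fixes A :: "real ^ 'n ^ 'p" and k :: nat and xt :: "real ^ 'n"
  assumes "\<forall>i j. A $ i $ j \<ge> 0"
    and "1 \<le> k" and "k \<le> CARD('p)"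
    and "\<forall>j. xt $ j \<in> {0, 1}"
  shows "(\<forall>x :: real ^ 'n. (\<forall>j. x $ j \<in> {0, 1}) \<longrightarrow>
            kth_largest k (A *v x) \<ge>
              kth_largest k (A *v xt) *
                ((\<Sum>i\<in>UNIV. xt $ i * x $ i) - (\<Sum>i\<in>UNIV. xt $ i) + 1))
         \<and> kth_largest k (A *v xt) =
              kth_largest k (A *v xt) *
                ((\<Sum>i\<in>UNIV. xt $ i * xt $ i) - (\<Sum>i\<in>UNIV. xt $ i) + 1)"
proof (intro conjI allI impI)
  have "(\<Sum>i\<in>UNIV. xt $ i * xt $ i) = (\<Sum>i\<in>UNIV. xt $ i)"
    by (rule sum.cong) (use assms(4) in auto)
  thus "kth_largest k (A *v xt) = kth_largest k (A *v xt) *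
                ((\<Sum>i\<in>UNIV. xt $ i * xt $ i) - (\<Sum>i\<in>UNIV. xt $ i) + 1)" by simp
next
  fix x :: "real ^ 'n"
  assume x: "\<forall>j. x $ j \<in> {0, 1}"
  have nn: "\<forall>i. 0 \<le> (A *v v) $ i" if "\<forall>j. 0 \<le> v $ j" for v :: "real ^ 'n"
    using assms(1) that by (auto simp: matrix_vector_mult_def intro: sum_nonneg)
  have Qx: "0 \<le> kth_largest k (A *v x)"
    by (rule kth_nonneg[OF assms(2,3)], rule nn) (use x in \<open>metis empty_iff insert_iff order_refl zero_le_one\<close>)
  have Qxt: "0 \<le> kth_largest k (A *v xt)"
    by (rule kth_nonneg[OF assms(2,3)], rule nn) (use assms(4) in \<open>metis empty_iff insert_iff order_refl zero_le_one\<close>)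
  let ?s = "(\<Sum>i\<in>UNIV. xt $ i * x $ i) - (\<Sum>i\<in>UNIV. xt $ i)"
  have s_eq: "?s = - (\<Sum>i\<in>UNIV. xt $ i * (1 - x $ i))"
    by (simp add: algebra_simps sum_subtractf)
  show "kth_largest k (A *v xt) * (?s + 1) \<le> kth_largest k (A *v x)"
  proof (cases "\<forall>i. xt $ i \<le> x $ i")
    case True
    have "\<forall>i. (A *v xt) $ i \<le> (A *v x) $ i"
      using True assms(1) by (auto simp: matrix_vector_mult_def intro!: sum_mono mult_left_mono)
    hence "kth_largest k (A *v xt) \<le> kth_largest k (A *v x)"
      using kth_mono[OF assms(2,3)] by blast
    moreover have "?s \<le> 0" unfolding s_eq
      apply (simp, intro sum_nonneg)
      subgoal for i using assms(4)[rule_format, of i] x[rule_format, of i] by auto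
      done
    ultimately show ?thesis using Qxt mult_left_mono[of "?s + 1" 1 "kth_largest k (A *v xt)"]
      by simp
  next
    case False
    then obtain i0 where i0: "x $ i0 < xt $ i0" using not_le by blast
    hence xi: "xt $ i0 = 1" "x $ i0 = 0" using assms(4) x by (metis empty_iff insert_iff less_irrefl not_one_less_zero)+
    have "1 \<le> (\<Sum>i\<in>UNIV. xt $ i * (1 - x $ i))"
    proof -
      have "xt $ i0 * (1 - x $ i0) \<le> (\<Sum>i\<in>UNIV. xt $ i * (1 - x $ i))"
      proof (rule member_le_sum)
        fix i
        show "0 \<le> xt $ i * (1 - x $ i)"
          using assms(4)[rule_format, of i] x[rule_format, of i] by auto
      qed simp_all
      thus ?thesis using xi by simp
    qed
    hence "?s + 1 \<le> 0" using s_eq by simp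
    hence "kth_largest k (A *v xt) * (?s + 1) \<le> 0" using Qxt
      by (simp add: mult_nonneg_nonpos)
    thus ?thesis using Qx by linarith
  qed
qed

end
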